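(* Let $P$ be a probability distribution on $\mathbb R^{d+1}$ with $(\mathbf X,Y)\sim P$. Let $\{b_n^0\}_{n\ge1}\subset\mathbb R$, $\{\mathbf b_n\}_{n\ge1}\subset\mathbb R^d$ and let $\{A_n\}_{n\ge1}$ be Borel subsets of $\mathbb R^{d+1}$ such that $\limsup_n P[A_n]>0$ and $\limsup_n E_P\big[|b_n^0+\mathbf b_n'\mathbf X-Y|^2 I_{A_n}(\mathbf X,Y)\big]<\infty$. Then there exist a subsequence $(n_k)_{k\ge1}$, sequences $\{d_k^0\}\subset\mathbb R$, $\{\mathbf d_k\}\subset\mathbb R^d$ and Borel sets $\{D_k\}$ such that $D_k\subseteq A_{n_k}$, $P[A_{n_k}\setminus D_k]\to0$, $d_k^0\to d^0\in\mathbb R$, $\mathbf d_k\to\mathbf d\in\mathbb R^d$, and for every $k\ge1$, $$(b_{n_k}^0+\mathbf b_{n_k}'\mathbf X-Y)\,I_{D_k}(\mathbf X,Y)=(d_k^0+\mathbf d_k'\mathbf X-Y)\,I_{D_k}(\mathbf X,Y)\quad P\text{-a.s.}$$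
   Context: $E_P$ denotes expectation under $P$ and $I_A$ the indicator function of the set $A$. *)

theory Defs
  imports "HOL-Probability.Probability"
begin

end

theory Submission
  imports Defs
begin

lemma key:
  fixes Z :: "'b \<Rightarrow> 'a::euclidean_space" and Y :: "'b \<Rightarrow> real"
  assumes P: "prob_space P" and Zm: "Z \<in> borel_measurable P" and Ym: "Y \<in> borel_measurable P"
  and A: "\<And>n. A n \<in> sets P" and ut: "uu \<longlonglongrightarrow> u" and R: "\<And>n. R n \<ge> 2^n"
  and M: "M \<ge> 0"
  and bnd: "\<And>n. (\<integral>\<^sup>+x. ennreal ((R n *\<^sub>R uu n \<bullet> Z x - Y x)\<^sup>2 * indicator (A n) x) \<partial>P) \<le> ennreal M"
  shows "(\<lambda>n. measure P (A n \<inter> {x\<in>space P. u \<bullet> Z x \<noteq> 0})) \<longlonglongrightarrow> 0"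
proof -
  interpret prob_space P by fact
  note A[measurable] Zm[measurable] Ym[measurable]
  have Rpos: "R n > 0" for n proof -
    have "(0::real) < 2^n" by simp
    then show ?thesis using R[of n] by linarith
  qed
  define g where "g n x = (uu n \<bullet> Z x - Y x / R n)\<^sup>2 * indicator (A n) x" for n x
  have gnn: "g n x \<ge> 0" for n x unfolding g_def by simp
  have gm[measurable]: "(\<lambda>x. g n x) \<in> borel_measurable P" for n
    unfolding g_def using A[of n] Zm Ym by measurable
  have geq: "g n x = (1 / (R n)\<^sup>2) * ((R n *\<^sub>R uu n \<bullet> Z x - Y x)\<^sup>2 * indicator (A n) x)" for n x
  proof -
    have Rn: "R n \<noteq> 0" using Rpos[of n] by simp
    have e: "R n *\<^sub>R uu n \<bullet> Z x - Y x = R n * (uu n \<bullet> Z x - Y x / R n)"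
      using Rn by (simp add: right_diff_distrib)
    have "(1 / (R n)\<^sup>2) * ((R n *\<^sub>R uu n \<bullet> Z x - Y x)\<^sup>2 * indicator (A n) x)
        = ((R n)\<^sup>2 / (R n)\<^sup>2) * ((uu n \<bullet> Z x - Y x / R n)\<^sup>2 * indicator (A n) x)"
      unfolding e power_mult_distrib by simp
    also have "\<dots> = g n x" using Rn unfolding g_def by simp
    finally show ?thesis by simp
  qed
  have gint: "(\<integral>\<^sup>+x. ennreal (g n x) \<partial>P) \<le> ennreal (M * (1/4)^n)" for n
  proof -
    have "(\<integral>\<^sup>+x. ennreal (g n x) \<partial>P) = (\<integral>\<^sup>+x. ennreal (1 / (R n)\<^sup>2) * ennreal ((R n *\<^sub>R uu n \<bullet> Z x - Y x)\<^sup>2 * indicator (A n) x) \<partial>P)"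
      by (intro nn_integral_cong, subst ennreal_mult[symmetric]) (auto simp: geq)
    also have "\<dots> = ennreal (1 / (R n)\<^sup>2) * (\<integral>\<^sup>+x. ennreal ((R n *\<^sub>R uu n \<bullet> Z x - Y x)\<^sup>2 * indicator (A n) x) \<partial>P)"
      by (intro nn_integral_cmult) measurable
    also have "\<dots> \<le> ennreal (1 / (R n)\<^sup>2) * ennreal M"
      using bnd[of n] by (intro mult_left_mono) auto
    also have "\<dots> = ennreal (M / (R n)\<^sup>2)" using M by (simp add: ennreal_mult[symmetric])
    also have "\<dots> \<le> ennreal (M * (1/4)^n)"
    proof (rule ennreal_leI)
      have "(4::real)^n \<le> (R n)\<^sup>2"
      proof -
        have "(4::real)^n = (2^n)\<^sup>2" by (simp add: power2_eq_square power_mult_distrib[symmetric])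
        also have "\<dots> \<le> (R n)\<^sup>2" using R[of n] by (intro power_mono) auto
        finally show ?thesis .
      qed
      then have "M / (R n)\<^sup>2 \<le> M / 4^n"
        using M Rpos[of n] by (intro divide_left_mono) auto
      then show "M / (R n)\<^sup>2 \<le> M * (1/4)^n"
        unfolding power_one_over by simp
    qed
    finally show ?thesis .
  qed
  have sumM: "summable (\<lambda>n. M * (1/4::real)^n)"
    by (intro summable_mult summable_geometric) auto
  have "(\<integral>\<^sup>+x. (\<Sum>n. ennreal (g n x)) \<partial>P) = (\<Sum>n. \<integral>\<^sup>+x. ennreal (g n x) \<partial>P)"
    by (intro nn_integral_suminf) measurable
  also have "\<dots> \<le> (\<Sum>n. ennreal (M * (1/4)^n))"
    by (intro suminf_le gint summableI)
  also have "\<dots> = ennreal (\<Sum>n. M * (1/4)^n)"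
    using M sumM by (intro suminf_ennreal2) auto
  also have "\<dots> < \<infinity>" by simp
  finally have "(\<integral>\<^sup>+x. (\<Sum>n. ennreal (g n x)) \<partial>P) \<noteq> \<infinity>"
    by simp
  then have "AE x in P. (\<Sum>n. ennreal (g n x)) \<noteq> \<infinity>"
    by (intro nn_integral_PInf_AE) measurable
  then have AEg: "AE x in P. (\<lambda>n. g n x) \<longlonglongrightarrow> 0"
  proof eventually_elim
    case (elim x)
    then have "summable (\<lambda>n. g n x)" using gnn by (intro summable_suminf_not_top) auto
    then show ?case by (rule summable_LIMSEQ_zero)
  qed
  have Rinf: "filterlim R at_infinity sequentially"
  proof -
    have "filterlim (\<lambda>n. real n) at_top sequentially" by (rule filterlim_real_sequentially)
    moreover have "real n \<le> R n" for n
    proof -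
      have "n < (2::nat)^n" by (rule less_exp)
      then have "real n < real ((2::nat)^n)" by (simp only: of_nat_less_iff)
      then have "real n \<le> (2::real)^n" by simp
      then show ?thesis using R[of n] by linarith
    qed
    then have "\<forall>n. real n \<le> R n" by blast
    then have "eventually (\<lambda>n. real n \<le> R n) sequentially" by (rule always_eventually)
    ultimately have "filterlim R at_top sequentially"
      by (rule filterlim_at_top_mono)
    then show ?thesis by (rule filterlim_at_top_imp_at_infinity)
  qed
  define B where "B n = A n \<inter> {x\<in>space P. u \<bullet> Z x \<noteq> 0}" for n
  have Bm: "B n \<in> sets P" for n unfolding B_def using A[of n] Zm by measurable
  have AEI: "AE x in P. (\<lambda>n. indicator (B n) x :: real) \<longlonglongrightarrow> 0"
    using AEg
  proof eventually_elim
    case (elim x)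
    show ?case
    proof (cases "u \<bullet> Z x = 0")
      case True then show ?thesis by (simp add: B_def)
    next
      case False
      define c where "c = (u \<bullet> Z x)\<^sup>2"
      have cpos: "c > 0" using False by (simp add: c_def)
      have "(\<lambda>n. (uu n \<bullet> Z x - Y x / R n)\<^sup>2) \<longlonglongrightarrow> (u \<bullet> Z x - 0)\<^sup>2"
        by (intro tendsto_intros ut tendsto_divide_0[OF tendsto_const Rinf])
      then have "(\<lambda>n. (uu n \<bullet> Z x - Y x / R n)\<^sup>2) \<longlonglongrightarrow> c" by (simp add: c_def)
      then have e1: "eventually (\<lambda>n. (uu n \<bullet> Z x - Y x / R n)\<^sup>2 > c/2) sequentially"
        using cpos by (intro order_tendstoD) auto
      have e2: "eventually (\<lambda>n. g n x < c/2) sequentially"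
        using elim cpos by (intro order_tendstoD) auto
      have "eventually (\<lambda>n. indicator (B n) x = (0::real)) sequentially"
        using e1 e2
      proof eventually_elim
        case (elim n)
        then show ?case unfolding g_def B_def by (auto simp: indicator_def split: if_splits)
      qed
      then show ?thesis by (rule tendsto_eventually)
    qed
  qed
  have "(\<lambda>n. integral\<^sup>L P (indicator (B n) :: _ \<Rightarrow> real)) \<longlonglongrightarrow> integral\<^sup>L P (\<lambda>x. 0::real)"
  proof (rule integral_dominated_convergence[where w="\<lambda>x. 1"])
    show "AE x in P. norm (indicator (B n) x :: real) \<le> 1" for n by auto
    show "AE x in P. (\<lambda>n. indicator (B n) x :: real) \<longlonglongrightarrow> 0" by (rule AEI)
    show "indicator (B n) \<in> borel_measurable P" for n using Bm[of n] by simp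
    show "(\<lambda>x. 0::real) \<in> borel_measurable P" by simp
    show "integrable P (\<lambda>x. 1::real)" by simp
  qed
  moreover have "B n \<inter> space P = B n" for n using sets.sets_into_space[OF Bm[of n]] by blast
  ultimately show ?thesis unfolding B_def by simp
qed


lemma subseq_grow:
  fixes f :: "nat \<Rightarrow> real"
  assumes "\<And>B N. \<exists>n\<ge>N. f n > B"
  shows "\<exists>r. strict_mono r \<and> (\<forall>k. f (r k) \<ge> 2^k)"
proof -
  define r where "r = rec_nat (SOME n. f n \<ge> 1) (\<lambda>k m. SOME n. n > m \<and> f n \<ge> 2^Suc k)"
  have ex: "\<exists>n. n > m \<and> f n \<ge> B" for m :: nat and B :: real
    using assms[where B=B and N="Suc m"] by (meson Suc_le_lessD less_imp_le)
  have r0: "f (r 0) \<ge> 1"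
    unfolding r_def using ex[of 0 1] by simp (metis (mono_tags, lifting) someI_ex)
  have rS: "r (Suc k) > r k \<and> f (r (Suc k)) \<ge> 2^Suc k" for k
  proof -
    have "r (Suc k) = (SOME n. n > r k \<and> f n \<ge> 2^Suc k)" unfolding r_def by simp
    then show ?thesis using someI_ex[OF ex[of "r k" "2^Suc k"]] by simp
  qed
  have "strict_mono r" using rS by (simp add: strict_mono_Suc_iff)
  moreover have "f (r k) \<ge> 2^k" for k using r0 rS by (cases k) auto
  ultimately show ?thesis by blast
qed


lemma main:
  fixes Z :: "'b \<Rightarrow> 'a::euclidean_space" and Y :: "'b \<Rightarrow> real"
    and v :: "nat \<Rightarrow> 'a" and A :: "nat \<Rightarrow> 'b set"
  assumes P: "prob_space P" and Zm: "Z \<in> borel_measurable P" and Ym: "Y \<in> borel_measurable P"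
    and M: "M \<ge> 0"
  shows "subspace S \<Longrightarrow> (\<forall>n. v n \<in> S) \<Longrightarrow> (\<forall>n. A n \<in> sets P) \<Longrightarrow>
    (\<forall>n. (\<integral>\<^sup>+x. ennreal ((v n \<bullet> Z x - Y x)\<^sup>2 * indicator (A n) x) \<partial>P) \<le> ennreal M) \<Longrightarrow>
    \<exists>r w c D. strict_mono r \<and> (\<forall>k. D k \<in> sets P \<and> D k \<subseteq> A (r k)) \<and>
      (\<lambda>k. measure P (A (r k) - D k)) \<longlonglongrightarrow> 0 \<and> w \<longlonglongrightarrow> c \<and>
      (\<forall>k. AE x in P. x \<in> D k \<longrightarrow> v (r k) \<bullet> Z x = w k \<bullet> Z x)"
proof (induction "dim S" arbitrary: S v A rule: less_induct)
  case less
  interpret prob_space P by fact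
  note Zm[measurable] Ym[measurable]
  have Am[measurable]: "A n \<in> sets P" for n using less.prems(3) by blast
  show ?case
  proof (cases "\<exists>B. \<forall>N. \<exists>n\<ge>N. norm (v n) \<le> B")
    case True
    then obtain B where B: "\<forall>N. \<exists>n\<ge>N. norm (v n) \<le> B" by blast
    then have "infinite {n. norm (v n) \<le> B}" using infinite_nat_iff_unbounded_le[of "{n. norm (v n) \<le> B}"] by auto
    then obtain r1 :: "nat \<Rightarrow> nat" where r1: "strict_mono r1" "\<forall>n. r1 n \<in> {n. norm (v n) \<le> B}"
      using infinite_enumerate by blast
    have "\<forall>n. (v \<circ> r1) n \<in> cball 0 B" using r1(2) by auto
    then obtain l r2 where r2: "strict_mono (r2 :: nat \<Rightarrow> nat)" "((v \<circ> r1) \<circ> r2) \<longlonglongrightarrow> l"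
      using seq_compactE[OF compact_imp_seq_compact[OF compact_cball]] by metis
    show ?thesis
    proof (intro exI conjI allI)
      show "strict_mono (r1 \<circ> r2)" using r1(1) r2(1) by (rule strict_mono_o)
      show "(v \<circ> (r1 \<circ> r2)) \<longlonglongrightarrow> l" using r2(2) by (simp add: o_assoc)
      show "(\<lambda>k. measure P (A ((r1 \<circ> r2) k) - A ((r1 \<circ> r2) k))) \<longlonglongrightarrow> 0" by simp
      show "A ((r1 \<circ> r2) k) \<in> sets P" for k by simp
      show "A ((r1 \<circ> r2) k) \<subseteq> A ((r1 \<circ> r2) k)" for k by simp
      show "AE x in P. x \<in> A ((r1 \<circ> r2) k) \<longrightarrow> v ((r1 \<circ> r2) k) \<bullet> Z x = (v \<circ> (r1 \<circ> r2)) k \<bullet> Z x" for k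
        by simp
    qed
  next
    case False
    have "\<exists>n\<ge>N. norm (v n) > B" for B N
    proof -
      from False obtain N0 where "\<forall>n\<ge>N0. norm (v n) > B" by (meson not_le)
      then show ?thesis by (intro exI[of _ "max N N0"]) auto
    qed
    then obtain r1 where r1: "strict_mono r1" "\<And>k. norm (v (r1 k)) \<ge> 2^k"
      using subseq_grow[of "\<lambda>n. norm (v n)"] by blast
    have npos: "norm (v (r1 k)) > 0" for k
    proof -
      have "(0::real) < 2^k" by simp
      then show ?thesis using r1(2)[of k] by linarith
    qed
    define uu where "uu k = v (r1 k) /\<^sub>R norm (v (r1 k))" for k
    have uuS: "uu k \<in> sphere 0 1 \<inter> S" for k
      using npos[of k] less.prems(1,2) unfolding uu_def by (auto intro: subspace_scale)
    have "compact (sphere 0 1 \<inter> S)"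
      using less.prems(1) by (intro compact_Int_closed compact_sphere closed_subspace)
    then obtain u r2 where u: "u \<in> sphere 0 1 \<inter> S" and r2: "strict_mono (r2 :: nat \<Rightarrow> nat)"
      and ut: "(uu \<circ> r2) \<longlonglongrightarrow> u"
      using seq_compactE[OF compact_imp_seq_compact] uuS by metis
    define r where "r = r1 \<circ> r2"
    have r: "strict_mono r" unfolding r_def using r1(1) r2 by (rule strict_mono_o)
    define R where "R k = norm (v (r k))" for k
    have RR: "R k \<ge> 2^k" for k
    proof -
      have "(2::real)^k \<le> 2^(r2 k)" using seq_suble[OF r2, of k] by (intro power_increasing) auto
      from order_trans[OF this r1(2)[of "r2 k"]] show ?thesis unfolding R_def r_def by simp
    qed
    have vR: "R k *\<^sub>R (uu \<circ> r2) k = v (r k)" for k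
      using npos[of "r2 k"] unfolding R_def r_def uu_def by simp
    have bndr: "(\<integral>\<^sup>+x. ennreal ((R n *\<^sub>R (uu \<circ> r2) n \<bullet> Z x - Y x)\<^sup>2 * indicator (A (r n)) x) \<partial>P) \<le> ennreal M" for n
      unfolding vR using less.prems(4) by blast
    have lim1: "(\<lambda>n. measure P (A (r n) \<inter> {x\<in>space P. u \<bullet> Z x \<noteq> 0})) \<longlonglongrightarrow> 0"
      by (rule key[OF P Zm Ym _ ut RR M bndr]) simp
    have uu1: "u \<bullet> u = 1" using u by (simp add: dot_square_norm)
    define S' where "S' = S \<inter> {x. u \<bullet> x = 0}"
    define v' where "v' n = v (r n) - (u \<bullet> v (r n)) *\<^sub>R u" for n
    define A' where "A' n = A (r n) \<inter> {x\<in>space P. u \<bullet> Z x = 0}" for n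
    have S'sub: "subspace S'" unfolding S'_def using less.prems(1)
      by (intro subspace_inter subspace_hyperplane)
    have v'S: "\<forall>n. v' n \<in> S'"
      using less.prems(1,2) u uu1 unfolding S'_def v'_def
      by (auto intro!: subspace_diff subspace_scale simp: inner_diff_right)
    have "u \<notin> S'" using uu1 unfolding S'_def by simp
    then have "S' \<subset> S" using u unfolding S'_def by blast
    then have "dim S' < dim S" using S'sub less.prems(1) by (metis dim_psubset span_eq_iff)
    have A'm: "\<forall>n. A' n \<in> sets P" unfolding A'_def by measurable
    have bnd': "\<forall>n. (\<integral>\<^sup>+x. ennreal ((v' n \<bullet> Z x - Y x)\<^sup>2 * indicator (A' n) x) \<partial>P) \<le> ennreal M"
    proof
      fix n
      have "(\<integral>\<^sup>+x. ennreal ((v' n \<bullet> Z x - Y x)\<^sup>2 * indicator (A' n) x) \<partial>P)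
          \<le> (\<integral>\<^sup>+x. ennreal ((v (r n) \<bullet> Z x - Y x)\<^sup>2 * indicator (A (r n)) x) \<partial>P)"
      proof (rule nn_integral_mono)
        fix x
        show "ennreal ((v' n \<bullet> Z x - Y x)\<^sup>2 * indicator (A' n) x) \<le> ennreal ((v (r n) \<bullet> Z x - Y x)\<^sup>2 * indicator (A (r n)) x)"
        proof (cases "x \<in> A' n")
          case True
          then have "u \<bullet> Z x = 0" "x \<in> A (r n)" unfolding A'_def by auto
          then show ?thesis using True unfolding v'_def by (simp add: inner_diff_left)
        next
          case False then show ?thesis by simp
        qed
      qed
      also have "\<dots> \<le> ennreal M" using less.prems(4) by blast
      finally show "(\<integral>\<^sup>+x. ennreal ((v' n \<bullet> Z x - Y x)\<^sup>2 * indicator (A' n) x) \<partial>P) \<le> ennreal M" .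
    qed
    obtain r3 w c D where r3: "strict_mono r3" and D: "\<forall>k. D k \<in> sets P \<and> D k \<subseteq> A' (r3 k)"
      and Dlim: "(\<lambda>k. measure P (A' (r3 k) - D k)) \<longlonglongrightarrow> 0" and wc: "w \<longlonglongrightarrow> c"
      and DAE: "\<forall>k. AE x in P. x \<in> D k \<longrightarrow> v' (r3 k) \<bullet> Z x = w k \<bullet> Z x"
      using less.hyps[OF \<open>dim S' < dim S\<close> S'sub v'S A'm bnd'] by blast
    show ?thesis
    proof (intro exI conjI allI)
      show "strict_mono (r \<circ> r3)" using r r3 by (rule strict_mono_o)
      show "w \<longlonglongrightarrow> c" by (rule wc)
      show "D k \<in> sets P" for k using D by blast
      show "D k \<subseteq> A ((r \<circ> r3) k)" for k using D unfolding A'_def by auto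
      show "AE x in P. x \<in> D k \<longrightarrow> v ((r \<circ> r3) k) \<bullet> Z x = w k \<bullet> Z x" for k
        using DAE[rule_format, of k]
      proof eventually_elim
        case (elim x)
        show ?case
        proof
          assume xD: "x \<in> D k"
          then have "u \<bullet> Z x = 0" using D unfolding A'_def by auto
          then have "v ((r \<circ> r3) k) \<bullet> Z x = v' (r3 k) \<bullet> Z x" unfolding v'_def by (simp add: inner_diff_left)
          then show "v ((r \<circ> r3) k) \<bullet> Z x = w k \<bullet> Z x" using elim xD by simp
        qed
      qed
      define E where "E k = A (r (r3 k)) \<inter> {x\<in>space P. u \<bullet> Z x \<noteq> 0}" for k
      have E0: "(\<lambda>k. measure P (E k)) \<longlonglongrightarrow> 0"
        unfolding E_def using LIMSEQ_subseq_LIMSEQ[OF lim1 r3] by (simp add: o_def)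
      have Em: "E k \<in> sets P" for k unfolding E_def by measurable
      have le: "measure P (A ((r \<circ> r3) k) - D k) \<le> measure P (E k) + measure P (A' (r3 k) - D k)" for k
      proof -
        have Dm: "D k \<in> sets P" using D by blast
        have "A ((r \<circ> r3) k) - D k \<subseteq> E k \<union> (A' (r3 k) - D k)"
          using sets.sets_into_space[OF Am[of "r (r3 k)"]] unfolding E_def A'_def by auto
        moreover have A'k: "A' (r3 k) \<in> sets P" using A'm by blast
        moreover have Dfm: "A' (r3 k) - D k \<in> sets P" using A'k Dm by (rule sets.Diff)
        moreover have "E k \<union> (A' (r3 k) - D k) \<in> sets P" using Em[of k] Dfm by (rule sets.Un)
        ultimately have "measure P (A ((r \<circ> r3) k) - D k) \<le> measure P (E k \<union> (A' (r3 k) - D k))"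
          by (intro finite_measure_mono)
        also have "\<dots> \<le> measure P (E k) + measure P (A' (r3 k) - D k)"
          using Em[of k] Dfm by (rule measure_Un_le)
        finally show ?thesis .
      qed
      have "(\<lambda>k. measure P (E k) + measure P (A' (r3 k) - D k)) \<longlonglongrightarrow> 0 + 0"
        by (intro tendsto_add E0 Dlim)
      then have lim2: "(\<lambda>k. measure P (E k) + measure P (A' (r3 k) - D k)) \<longlonglongrightarrow> 0" by simp
      show "(\<lambda>k. measure P (A ((r \<circ> r3) k) - D k)) \<longlonglongrightarrow> 0"
      proof (rule tendsto_sandwich[OF _ _ tendsto_const lim2])
        show "\<forall>\<^sub>F k in sequentially. 0 \<le> measure P (A ((r \<circ> r3) k) - D k)" by simp
        show "\<forall>\<^sub>F k in sequentially. measure P (A ((r \<circ> r3) k) - D k) \<le> measure P (E k) + measure P (A' (r3 k) - D k)"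
          using le by simp
      qed
    qed
  qed
qed


theorem lemma1:
  fixes P :: "((real ^ 'd) \<times> real) measure"
    and b0 :: "nat \<Rightarrow> real" and b :: "nat \<Rightarrow> real ^ 'd"
    and A :: "nat \<Rightarrow> ((real ^ 'd) \<times> real) set"
  assumes "prob_space P"
    and "sets P = sets borel"
    and "\<And>n. A n \<in> sets borel"
    and "limsup (\<lambda>n. emeasure P (A n)) > 0"
    and "limsup (\<lambda>n. \<integral>\<^sup>+ z. ennreal ((b0 n + b n \<bullet> fst z - snd z)\<^sup>2 * indicator (A n) z) \<partial>P) < \<infinity>"
  shows "\<exists>nk :: nat \<Rightarrow> nat. strict_mono nk \<and>
    (\<exists>(d0 :: nat \<Rightarrow> real) (dv :: nat \<Rightarrow> real ^ 'd) (D :: nat \<Rightarrow> ((real ^ 'd) \<times> real) set)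
       (c0 :: real) (c :: real ^ 'd).
       (\<forall>k. D k \<in> sets borel \<and> D k \<subseteq> A (nk k)) \<and>
       (\<lambda>k. measure P (A (nk k) - D k)) \<longlonglongrightarrow> 0 \<and>
       d0 \<longlonglongrightarrow> c0 \<and> dv \<longlonglongrightarrow> c \<and>
       (\<forall>k. AE z in P. (b0 (nk k) + b (nk k) \<bullet> fst z - snd z) * indicator (D k) z =
                        (d0 k + dv k \<bullet> fst z - snd z) * indicator (D k) z))"
proof -
  define F where "F n = (\<integral>\<^sup>+ z. ennreal ((b0 n + b n \<bullet> fst z - snd z)\<^sup>2 * indicator (A n) z) \<partial>P)" for n
  have "limsup F < top" using assms(5) unfolding F_def by simp
  then obtain a where a: "a \<ge> 0" "limsup F = ennreal a" using less_top_ennreal by blast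
  have "limsup F < ennreal (a + 1)" using a by simp
  then have "eventually (\<lambda>n. F n < ennreal (a + 1)) sequentially" by (rule Limsup_lessD)
  then obtain N where N: "\<And>n. n \<ge> N \<Longrightarrow> F n < ennreal (a + 1)" by (auto simp: eventually_sequentially)
  define Z where "Z z = (1::real, fst z)" for z :: "(real ^ 'd) \<times> real"
  define Y where "Y z = snd z" for z :: "(real ^ 'd) \<times> real"
  define v where "v n = (b0 (n + N), b (n + N))" for n
  define A' where "A' n = A (n + N)" for n
  have Zm: "Z \<in> borel_measurable P"
    unfolding measurable_cong_sets[OF assms(2) refl] Z_def
    by (intro borel_measurable_continuous_onI continuous_intros)
  have Ym: "Y \<in> borel_measurable P"
    unfolding measurable_cong_sets[OF assms(2) refl] Y_def
    by (intro borel_measurable_continuous_onI continuous_intros)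
  have vZ: "v n \<bullet> Z z - Y z = b0 (n + N) + b (n + N) \<bullet> fst z - snd z" for n z
    unfolding v_def Z_def Y_def by simp
  have "\<exists>r w c D. strict_mono r \<and> (\<forall>k. D k \<in> sets P \<and> D k \<subseteq> A' (r k)) \<and>
      (\<lambda>k. measure P (A' (r k) - D k)) \<longlonglongrightarrow> 0 \<and> w \<longlonglongrightarrow> c \<and>
      (\<forall>k. AE x in P. x \<in> D k \<longrightarrow> v (r k) \<bullet> Z x = w k \<bullet> Z x)"
  proof (rule main[OF assms(1) Zm Ym, of "a + 1" UNIV])
    show "0 \<le> a + 1" using a by simp
    show "subspace UNIV" by (rule subspace_UNIV)
    show "\<forall>n. v n \<in> UNIV" by simp
    show "\<forall>n. A' n \<in> sets P" unfolding A'_def assms(2) using assms(3) by blast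
    show "\<forall>n. (\<integral>\<^sup>+x. ennreal ((v n \<bullet> Z x - Y x)\<^sup>2 * indicator (A' n) x) \<partial>P) \<le> ennreal (a + 1)"
    proof
      fix n
      have "(\<integral>\<^sup>+x. ennreal ((v n \<bullet> Z x - Y x)\<^sup>2 * indicator (A' n) x) \<partial>P) = F (n + N)"
        unfolding vZ F_def A'_def ..
      also have "\<dots> \<le> ennreal (a + 1)" using N[of "n + N"] by simp
      finally show "(\<integral>\<^sup>+x. ennreal ((v n \<bullet> Z x - Y x)\<^sup>2 * indicator (A' n) x) \<partial>P) \<le> ennreal (a + 1)" .
    qed
  qed
  then obtain r w c D where r: "strict_mono r" and D: "\<forall>k. D k \<in> sets P \<and> D k \<subseteq> A' (r k)"
    and Dlim: "(\<lambda>k. measure P (A' (r k) - D k)) \<longlonglongrightarrow> 0" and wc: "w \<longlonglongrightarrow> c"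
    and DAE: "\<forall>k. AE x in P. x \<in> D k \<longrightarrow> v (r k) \<bullet> Z x = w k \<bullet> Z x"
    by blast
  show ?thesis
  proof (intro exI conjI allI)
    show "strict_mono (\<lambda>k. r k + N)" using r by (simp add: strict_mono_def)
    show "D k \<in> sets borel" for k using D assms(2) by blast
    show "D k \<subseteq> A (r k + N)" for k using D unfolding A'_def by blast
    show "(\<lambda>k. measure P (A (r k + N) - D k)) \<longlonglongrightarrow> 0" using Dlim unfolding A'_def .
    show "(\<lambda>k. fst (w k)) \<longlonglongrightarrow> fst c" using wc by (rule tendsto_fst)
    show "(\<lambda>k. snd (w k)) \<longlonglongrightarrow> snd c" using wc by (rule tendsto_snd)
    show "AE z in P. (b0 (r k + N) + b (r k + N) \<bullet> fst z - snd z) * indicator (D k) z =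
                        (fst (w k) + snd (w k) \<bullet> fst z - snd z) * indicator (D k) z" for k
      using DAE[rule_format, of k]
    proof eventually_elim
      case (elim z)
      show ?case
      proof (cases "z \<in> D k")
        case True
        then have "v (r k) \<bullet> Z z = w k \<bullet> Z z" using elim by blast
        then have "b0 (r k + N) + b (r k + N) \<bullet> fst z = fst (w k) + snd (w k) \<bullet> fst z"
          unfolding v_def Z_def by (cases "w k") simp
        then show ?thesis by simp
      next
        case False then show ?thesis by simp
      qed
    qed
  qed
qed

end
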